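(* Let $\mathfrak g$ be a pre-Lie algebra, $r\in\mathrm{Sym}^2(\mathfrak g)$ an $\mathfrak s$-matrix, and $\kappa\in\mathrm{Sym}^2(\mathfrak g)$ such that $r+t\kappa$ is an $\mathfrak s$-matrix for all $t\in\mathbb K$. Define $\pi:\mathfrak g^*\otimes\mathfrak g^*\to\mathfrak g^*$ by $\pi(\alpha,\beta)=\mathrm{ad}^*_{\kappa^\sharp(\alpha)}\beta-R^*_{\kappa^\sharp(\beta)}\alpha$. Then $\pi$ generates a one-parameter infinitesimal deformation of the phase space $(\mathfrak g^c,\mathfrak g^{*c},\omega_p)$ associated to $r$ (where $\mathfrak g^*$ carries the pre-Lie product $\cdot_r$): for every $t\in\mathbb K$, $\alpha\ast_t\beta=\alpha\cdot_r\beta+t\pi(\alpha,\beta)$ is a pre-Lie product on $\mathfrak g^*$ and $(\mathfrak g^c,(\mathfrak g^*,\ast_t)^c,\omega_p)$ is a phase space of $\mathfrak g^c$.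
   Context: A pre-Lie algebra is a finite-dimensional vector space over a field $\mathbb K$ of characteristic $0$ with product $\cdot$ satisfying $(x\cdot y)\cdot z-x\cdot(y\cdot z)=(y\cdot x)\cdot z-y\cdot(x\cdot z)$; its sub-adjacent Lie bracket is the commutator, written $[x,y]_{\mathfrak g}$ on $\mathfrak g$, and $\mathfrak g^c$ denotes this Lie algebra. Define $\langle L^*_x\alpha,y\rangle=-\langle\alpha,x\cdot y\rangle$, $\langle R^*_x\alpha,y\rangle=-\langle\alpha,y\cdot x\rangle$, $\mathrm{ad}^*_x=L^*_x-R^*_x$. For $r\in\mathrm{Sym}^2(\mathfrak g)$, $\langle r^\sharp(\alpha),\beta\rangle=r(\alpha,\beta)$; for $r=\sum_ia_i\otimes b_i$, $[r,r]=-\sum a_i\cdot a_j\otimes b_i\otimes b_j+\sum a_i\otimes b_i\cdot a_j\otimes b_j+\sum a_i\otimes a_j\otimes[b_i,b_j]_{\mathfrak g}$; $r$ is an $\mathfrak s$-matrix if $[r,r]=0$. Set $\alpha\cdot_r\beta=\mathrm{ad}^*_{r^\sharp(\alpha)}\beta-R^*_{r^\sharp(\beta)}\alpha$ (a pre-Lie product on $\mathfrak g^*$ when $r$ is an $\mathfrak s$-matrix). Given a pre-Lie product $\ast$ on $\mathfrak g^*$, with commutator $[\alpha,\beta]_\ast=\alpha\ast\beta-\beta\ast\alpha$ and $L^*_\alpha:\mathfrak g\to\mathfrak g$ defined by $\langle L^*_\alpha x,\beta\rangle=-\langle x,\alpha\ast\beta\rangle$, we say $(\mathfrak g^c,(\mathfrak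 g^*,\ast)^c,\omega_p)$ is a phase space of $\mathfrak g^c$ if the bracket $[x+\alpha,y+\beta]_p=[\alpha,\beta]_\ast+L^*_x\beta-L^*_y\alpha+L^*_\alpha y-L^*_\beta x+[x,y]_{\mathfrak g}$ is a Lie bracket on $\mathfrak g\oplus\mathfrak g^*$ for which $\omega_p(x+\alpha,y+\beta)=\langle\alpha,y\rangle-\langle x,\beta\rangle$ is a $2$-cocycle, i.e. $\omega_p([u,v]_p,w)+\omega_p([v,w]_p,u)+\omega_p([w,u]_p,v)=0$. *)

theory Defs
  imports "HOL-Analysis.Finite_Cartesian_Product"
begin

text \<open>Coordinates: g = K^n with K a field of characteristic 0 and 'n a finite index type;
  g* is identified with K^n through the (nondegenerate) pairing below.\<close>

definition sc :: "'a::times \<Rightarrow> 'a ^ 'n \<Rightarrow> 'a ^ 'n" where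
  "sc c v = (\<chi> k. c * v $ k)"

definition ee :: "'n \<Rightarrow> 'a::{zero,one} ^ 'n" where
  "ee i = (\<chi> k. if k = i then 1 else 0)"

definition pair :: "'a::field ^ 'n::finite \<Rightarrow> 'a ^ 'n \<Rightarrow> 'a" where
  "pair \<alpha> x = (\<Sum>i\<in>UNIV. \<alpha> $ i * x $ i)"

definition bilinear_map :: "('a::field ^ 'n \<Rightarrow> 'a ^ 'n \<Rightarrow> 'a ^ 'n) \<Rightarrow> bool" where
  "bilinear_map m \<longleftrightarrow>
     (\<forall>x y z. m (x + y) z = m x z + m y z) \<and> (\<forall>c x z. m (sc c x) z = sc c (m x z)) \<and>
     (\<forall>x y z. m z (x + y) = m z x + m z y) \<and> (\<forall>c x z. m z (sc c x) = sc c (m z x))"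

definition is_pre_Lie :: "('a::field ^ 'n \<Rightarrow> 'a ^ 'n \<Rightarrow> 'a ^ 'n) \<Rightarrow> bool" where
  "is_pre_Lie m \<longleftrightarrow> bilinear_map m \<and>
     (\<forall>x y z. m (m x y) z - m x (m y z) = m (m y x) z - m y (m x z))"

definition commut :: "('a::field ^ 'n \<Rightarrow> 'a ^ 'n \<Rightarrow> 'a ^ 'n) \<Rightarrow> 'a ^ 'n \<Rightarrow> 'a ^ 'n \<Rightarrow> 'a ^ 'n" where
  "commut m x y = m x y - m y x"

text \<open>Dual actions on g*: <L*_x a, y> = - <a, x.y>, <R*_x a, y> = - <a, y.x>.\<close>
definition Ldual :: "('a::field ^ 'n::finite \<Rightarrow> 'a ^ 'n \<Rightarrow> 'a ^ 'n) \<Rightarrow> 'a ^ 'n \<Rightarrow> 'a ^ 'n \<Rightarrow> 'a ^ 'n" where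
  "Ldual m x \<alpha> = (\<chi> j. - pair \<alpha> (m x (ee j)))"

definition Rdual :: "('a::field ^ 'n::finite \<Rightarrow> 'a ^ 'n \<Rightarrow> 'a ^ 'n) \<Rightarrow> 'a ^ 'n \<Rightarrow> 'a ^ 'n \<Rightarrow> 'a ^ 'n" where
  "Rdual m x \<alpha> = (\<chi> j. - pair \<alpha> (m (ee j) x))"

definition addual :: "('a::field ^ 'n::finite \<Rightarrow> 'a ^ 'n \<Rightarrow> 'a ^ 'n) \<Rightarrow> 'a ^ 'n \<Rightarrow> 'a ^ 'n \<Rightarrow> 'a ^ 'n" where
  "addual m x \<alpha> = Ldual m x \<alpha> - Rdual m x \<alpha>"

text \<open>Dual action of a product on g* back on g: <L*_a x, b> = - <x, a * b>.\<close>
definition Lstar :: "('a::field ^ 'n::finite \<Rightarrow> 'a ^ 'n \<Rightarrow> 'a ^ 'n) \<Rightarrow> 'a ^ 'n \<Rightarrow> 'a ^ 'n \<Rightarrow> 'a ^ 'n" where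
  "Lstar ast \<alpha> x = (\<chi> j. - pair (ast \<alpha> (ee j)) x)"

text \<open>Elements of g (x) g are given by coefficient matrices r = sum r_ij e_i (x) e_j;
  Sym^2(g) = symmetric ones.\<close>
definition symm :: "'a ^ 'n ^ 'n \<Rightarrow> bool" where
  "symm r \<longleftrightarrow> (\<forall>i j. r $ i $ j = r $ j $ i)"

definition sharp :: "'a::field ^ 'n::finite ^ 'n \<Rightarrow> 'a ^ 'n \<Rightarrow> 'a ^ 'n" where
  "sharp r \<alpha> = (\<chi> j. \<Sum>i\<in>UNIV. r $ i $ j * \<alpha> $ i)"

definition smat :: "'a::times \<Rightarrow> 'a ^ 'n ^ 'n \<Rightarrow> 'a ^ 'n ^ 'n" where
  "smat t k = (\<chi> i j. t * k $ i $ j)"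

text \<open>[r,r] for r = sum_p a_p (x) b_p, with p = (i,j), a_p = r_ij e_i, b_p = e_j, as an element
  of g (x) g (x) g, evaluated on (alpha, beta, gamma) in g* x g* x g*.\<close>
definition rr_eval :: "('a::field ^ 'n::finite \<Rightarrow> 'a ^ 'n \<Rightarrow> 'a ^ 'n) \<Rightarrow> 'a ^ 'n ^ 'n
     \<Rightarrow> 'a ^ 'n \<Rightarrow> 'a ^ 'n \<Rightarrow> 'a ^ 'n \<Rightarrow> 'a" where
  "rr_eval m r \<alpha> \<beta> \<gamma> =
     (let a = (\<lambda>(i,j). sc (r $ i $ j) (ee i)); b = (\<lambda>(i::'n,j). ee j);
          T = (\<lambda>u v w. pair \<alpha> u * pair \<beta> v * pair \<gamma> w) in
      - (\<Sum>p\<in>UNIV. \<Sum>q\<in>UNIV. T (m (a p) (a q)) (b p) (b q))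
      + (\<Sum>p\<in>UNIV. \<Sum>q\<in>UNIV. T (a p) (m (b p) (a q)) (b q))
      + (\<Sum>p\<in>UNIV. \<Sum>q\<in>UNIV. T (a p) (a q) (commut m (b p) (b q))))"

definition s_matrix :: "('a::field ^ 'n::finite \<Rightarrow> 'a ^ 'n \<Rightarrow> 'a ^ 'n) \<Rightarrow> 'a ^ 'n ^ 'n \<Rightarrow> bool" where
  "s_matrix m r \<longleftrightarrow> (\<forall>\<alpha> \<beta> \<gamma>. rr_eval m r \<alpha> \<beta> \<gamma> = 0)"

definition dot_r :: "('a::field ^ 'n::finite \<Rightarrow> 'a ^ 'n \<Rightarrow> 'a ^ 'n) \<Rightarrow> 'a ^ 'n ^ 'n
     \<Rightarrow> 'a ^ 'n \<Rightarrow> 'a ^ 'n \<Rightarrow> 'a ^ 'n" where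
  "dot_r m r \<alpha> \<beta> = addual m (sharp r \<alpha>) \<beta> - Rdual m (sharp r \<beta>) \<alpha>"

text \<open>Elements of g (+) g* as pairs (x, alpha).\<close>
definition padd :: "('a::plus ^ 'n) \<times> ('a ^ 'n) \<Rightarrow> ('a ^ 'n) \<times> ('a ^ 'n) \<Rightarrow> ('a ^ 'n) \<times> ('a ^ 'n)" where
  "padd u v = (fst u + fst v, snd u + snd v)"

definition psc :: "'a::times \<Rightarrow> ('a ^ 'n) \<times> ('a ^ 'n) \<Rightarrow> ('a ^ 'n) \<times> ('a ^ 'n)" where
  "psc c u = (sc c (fst u), sc c (snd u))"

definition is_Lie_bracket :: "(('a::field ^ 'n) \<times> ('a ^ 'n) \<Rightarrow> ('a ^ 'n) \<times> ('a ^ 'n) \<Rightarrow> ('a ^ 'n) \<times> ('a ^ 'n)) \<Rightarrow> bool" where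
  "is_Lie_bracket b \<longleftrightarrow>
     (\<forall>u v w. b (padd u v) w = padd (b u w) (b v w)) \<and> (\<forall>c u w. b (psc c u) w = psc c (b u w)) \<and>
     (\<forall>u v w. b w (padd u v) = padd (b w u) (b w v)) \<and> (\<forall>c u w. b w (psc c u) = psc c (b w u)) \<and>
     (\<forall>u. b u u = (0, 0)) \<and>
     (\<forall>u v w. padd (padd (b u (b v w)) (b v (b w u))) (b w (b u v)) = (0, 0))"

definition pbr :: "('a::field ^ 'n::finite \<Rightarrow> 'a ^ 'n \<Rightarrow> 'a ^ 'n) \<Rightarrow> ('a ^ 'n \<Rightarrow> 'a ^ 'n \<Rightarrow> 'a ^ 'n)
     \<Rightarrow> ('a ^ 'n) \<times> ('a ^ 'n) \<Rightarrow> ('a ^ 'n) \<times> ('a ^ 'n) \<Rightarrow> ('a ^ 'n) \<times> ('a ^ 'n)" where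
  "pbr m ast u v = (case u of (x, \<alpha>) \<Rightarrow> case v of (y, \<beta>) \<Rightarrow>
     (commut m x y + Lstar ast \<alpha> y - Lstar ast \<beta> x,
      commut ast \<alpha> \<beta> + Ldual m x \<beta> - Ldual m y \<alpha>))"

definition omega_p :: "('a::field ^ 'n::finite) \<times> ('a ^ 'n) \<Rightarrow> ('a ^ 'n) \<times> ('a ^ 'n) \<Rightarrow> 'a" where
  "omega_p u v = pair (snd u) (fst v) - pair (fst u) (snd v)"

definition phase_space :: "('a::field ^ 'n::finite \<Rightarrow> 'a ^ 'n \<Rightarrow> 'a ^ 'n) \<Rightarrow> ('a ^ 'n \<Rightarrow> 'a ^ 'n \<Rightarrow> 'a ^ 'n) \<Rightarrow> bool" where
  "phase_space m ast \<longleftrightarrow> is_Lie_bracket (pbr m ast) \<and>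
     (\<forall>u v w. omega_p (pbr m ast u v) w + omega_p (pbr m ast v w) u + omega_p (pbr m ast w u) v = 0)"

end

theory Submission imports Defs begin


lemma sc_comp[simp]: "sc c v $ k = c * v $ k" by (simp add: sc_def)
lemma ee_comp[simp]: "ee i $ k = (if k = i then (1::'a::{zero,one}) else 0)" by (simp add: ee_def)

lemma pair_add1[simp]: "pair (a + b) x = pair a x + pair b x"
  by (simp add: pair_def algebra_simps sum.distrib)
lemma pair_add2[simp]: "pair x (a + b) = pair x a + pair x b"
  by (simp add: pair_def algebra_simps sum.distrib)
lemma pair_diff1[simp]: "pair (a - b) x = pair a x - pair b x"
  by (simp add: pair_def algebra_simps sum_subtractf)
lemma pair_diff2[simp]: "pair x (a - b) = pair x a - pair x b"
  by (simp add: pair_def algebra_simps sum_subtractf)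
lemma pair_minus1[simp]: "pair (- a) x = - pair a x"
  by (simp add: pair_def sum_negf)
lemma pair_minus2[simp]: "pair x (- a) = - pair x a"
  by (simp add: pair_def sum_negf)
lemma pair_sc1[simp]: "pair (sc c a) x = c * pair a x"
  by (simp add: pair_def sum_distrib_left mult.assoc)
lemma pair_sc2[simp]: "pair x (sc c a) = c * pair x a"
  by (simp add: pair_def sum_distrib_left mult.left_commute)
lemma pair_zero1[simp]: "pair 0 x = 0" by (simp add: pair_def)
lemma pair_zero2[simp]: "pair x 0 = 0" by (simp add: pair_def)
lemma pair_ee2[simp]: "pair a (ee j) = a $ j"
  by (simp add: pair_def if_distrib cong: if_cong)
lemma pair_comm: "pair a b = pair b a" by (simp add: pair_def mult.commute)
lemma pair_sum2: "finite A \<Longrightarrow> pair a (\<Sum>p\<in>A. f p) = (\<Sum>p\<in>A. pair a (f p))"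
  by (induct A rule: finite_induct) auto
lemma pair_sum1: "finite A \<Longrightarrow> pair (\<Sum>p\<in>A. f p) a = (\<Sum>p\<in>A. pair (f p) a)"
  by (induct A rule: finite_induct) auto

lemma vec_eq_pair: "(\<And>y. pair a y = pair b y) \<Longrightarrow> a = b"
proof -
  assume h: "\<And>y. pair a y = pair b y"
  show ?thesis unfolding vec_eq_iff using h[of "ee _"] by simp
qed

lemma sc_add[simp]: "sc (c::'a::field) (x + y) = sc c x + sc c y" by (simp add: vec_eq_iff algebra_simps)
lemma sc_zero[simp]: "sc (c::'a::field) 0 = 0" "sc (0::'a::field) x = 0" by (simp_all add: vec_eq_iff)

definition lin :: "('a::field ^ 'n \<Rightarrow> 'a ^ 'm) \<Rightarrow> bool" where
  "lin f \<longleftrightarrow> (\<forall>x y. f (x+y) = f x + f y) \<and> (\<forall>c x. f (sc c x) = sc c (f x))"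

lemma lin_0: "lin f \<Longrightarrow> f 0 = 0"
  unfolding lin_def by (metis sc_zero)
lemma lin_sum: assumes "lin f" shows "finite A \<Longrightarrow> f (\<Sum>p\<in>A. g p) = (\<Sum>p\<in>A. f (g p))"
  by (induct A rule: finite_induct) (use assms in \<open>auto simp: lin_0 lin_def\<close>)
lemma lin_sc: "lin f \<Longrightarrow> f (sc c x) = sc c (f x)" unfolding lin_def by blast

lemma vec_decomp: "(y::'a::field^'n::finite) = (\<Sum>j\<in>UNIV. sc (y$j) (ee j))"
  by (simp add: vec_eq_iff if_distrib cong: if_cong)

lemma pair_lin: assumes "lin f"
  shows "pair (\<chi> j. pair a (f (ee j))) y = pair a (f y)"
proof -
  have "f y = (\<Sum>j\<in>UNIV. sc (y$j) (f (ee j)))"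
    by (subst vec_decomp) (simp add: lin_sum[OF assms] lin_sc[OF assms])
  then have "pair a (f y) = (\<Sum>j\<in>UNIV. y$j * pair a (f (ee j)))" by (simp add: pair_sum2)
  then show ?thesis by (simp add: pair_def[of "vec_lambda _"] mult.commute)
qed

lemma pair_lin_neg: assumes "lin f"
  shows "pair (\<chi> j. - pair a (f (ee j))) y = - pair a (f y)"
proof -
  have "(\<chi> j. - pair a (f (ee j))) = - (\<chi> j. pair a (f (ee j)))" by (simp add: vec_eq_iff)
  then show ?thesis using pair_lin[OF assms] by simp
qed



lemma lin_diff: "lin f \<Longrightarrow> f (x - y) = f x - f y"
proof -
  assume l: "lin f"
  have "f (-y) = - f y"
  proof -
    have "-y = sc (-1) y" by (simp add: vec_eq_iff)
    moreover have "sc (-1) (f y) = - f y" by (simp add: vec_eq_iff)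
    ultimately show ?thesis using lin_sc[OF l, of "-1" y] by metis
  qed
  moreover have "f (x + (-y)) = f x + f (-y)" using l unfolding lin_def by blast
  ultimately show ?thesis by simp
qed

lemma lin_neg: "lin f \<Longrightarrow> f (- y) = - f y"
  using lin_diff[of f 0 y] by (simp add: lin_0)

lemma lin_add: "lin f \<Longrightarrow> f (x + y) = f x + f y" unfolding lin_def by blast

lemma bil_lin1: "bilinear_map m \<Longrightarrow> lin (\<lambda>v. m v z)" unfolding bilinear_map_def lin_def by blast
lemma bil_lin2: "bilinear_map m \<Longrightarrow> lin (m z)" unfolding bilinear_map_def lin_def by blast

lemma pair_Ldual: "lin (m x) \<Longrightarrow> pair (Ldual m x \<alpha>) y = - pair \<alpha> (m x y)"
  unfolding Ldual_def by (rule pair_lin_neg)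
lemma pair_Rdual: "lin (\<lambda>v. m v x) \<Longrightarrow> pair (Rdual m x \<alpha>) y = - pair \<alpha> (m y x)"
  unfolding Rdual_def using pair_lin_neg[of "\<lambda>v. m v x"] by simp
lemma pair_Lstar: assumes "lin (ast \<alpha>)" shows "pair \<delta> (Lstar ast \<alpha> x) = - pair x (ast \<alpha> \<delta>)"
proof -
  have "Lstar ast \<alpha> x = (\<chi> j. - pair x (ast \<alpha> (ee j)))"
    unfolding Lstar_def by (simp add: pair_comm)
  then show ?thesis using pair_lin_neg[OF assms] by (simp add: pair_comm[of \<delta>])
qed

lemma lin_sharp: "lin (sharp R)"
  unfolding lin_def sharp_def by (simp add: vec_eq_iff algebra_simps sum.distrib sum_distrib_left)

lemma pair_sharp_sym: assumes "symm R" shows "pair \<beta> (sharp R \<alpha>) = pair \<alpha> (sharp R \<beta>)"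
proof -
  have "pair \<beta> (sharp R \<alpha>) = (\<Sum>j\<in>UNIV. \<Sum>i\<in>UNIV. \<beta>$j * R$i$j * \<alpha>$i)"
    by (simp add: pair_def sharp_def sum_distrib_left mult.assoc)
  also have "\<dots> = (\<Sum>i\<in>UNIV. \<Sum>j\<in>UNIV. \<beta>$j * R$i$j * \<alpha>$i)" by (rule sum.swap)
  also have "\<dots> = pair \<alpha> (sharp R \<beta>)"
    using assms by (simp add: pair_def sharp_def sum_distrib_left symm_def mult_ac)
  finally show ?thesis .
qed

lemma collapse:
  assumes "\<And>u. lin (M u)" "\<And>w. lin (\<lambda>v. M v w)" "finite A" "finite B"
  shows "pair \<delta> (M (\<Sum>p\<in>A. sc (c p) (f p)) (\<Sum>q\<in>B. sc (d q) (g q)))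
       = (\<Sum>p\<in>A. \<Sum>q\<in>B. c p * d q * pair \<delta> (M (f p) (g q)))"
proof -
  have "M (\<Sum>p\<in>A. sc (c p) (f p)) (\<Sum>q\<in>B. sc (d q) (g q))
      = (\<Sum>p\<in>A. sc (c p) (M (f p) (\<Sum>q\<in>B. sc (d q) (g q))))"
    using lin_sum[OF assms(2) assms(3)] lin_sc[OF assms(2)] by simp
  also have "\<dots> = (\<Sum>p\<in>A. sc (c p) (\<Sum>q\<in>B. sc (d q) (M (f p) (g q))))"
    using lin_sum[OF assms(1) assms(4)] lin_sc[OF assms(1)] by simp
  finally show ?thesis using assms(3,4)
    by (simp add: pair_sum2 sum_distrib_left mult_ac)
qed



lemma sum_pairs: "(\<Sum>p\<in>(UNIV::('n::finite\<times>'n) set). g p) = (\<Sum>i\<in>UNIV. \<Sum>j\<in>UNIV. g (i,j))"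
  by (simp add: sum.cartesian_product)

lemma sumA: assumes "symm R"
  shows "(\<Sum>p\<in>UNIV. sc (pair \<beta> ((\<lambda>(i::'n::finite,j). ee j) p)) ((\<lambda>(i,j). sc (R $ i $ j) (ee i)) p))
     = sharp R (\<beta>::'a::field^'n)"
  unfolding vec_eq_iff
proof
  fix k
  have "(\<Sum>p\<in>UNIV. sc (pair \<beta> ((\<lambda>(i::'n::finite,j). ee j) p)) ((\<lambda>(i,j). sc (R $ i $ j) (ee i)) p)) $ k
     = (\<Sum>i\<in>UNIV. \<Sum>j\<in>UNIV. \<beta> $ j * (R $ i $ j * (if k = i then 1 else 0)))"
    by (simp add: sum_pairs)
  also have "\<dots> = (\<Sum>j\<in>UNIV. \<beta> $ j * R $ k $ j)"
    by (simp add: if_distrib sum.swap[of _ UNIV UNIV] cong: if_cong)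
  also have "\<dots> = sharp R \<beta> $ k" using assms by (simp add: sharp_def symm_def mult.commute)
  finally show "(\<Sum>p\<in>UNIV. sc (pair \<beta> ((\<lambda>(i::'n::finite,j). ee j) p)) ((\<lambda>(i,j). sc (R $ i $ j) (ee i)) p)) $ k = sharp R \<beta> $ k" .
qed

lemma sumB:
  shows "(\<Sum>p\<in>UNIV. sc (pair \<alpha> ((\<lambda>(i::'n::finite,j). sc (R $ i $ j) (ee i)) p)) ((\<lambda>(i,j). ee j) p))
     = sharp R (\<alpha>::'a::field^'n)"
  unfolding vec_eq_iff
proof
  fix k
  have "(\<Sum>p\<in>UNIV. sc (pair \<alpha> ((\<lambda>(i::'n::finite,j). sc (R $ i $ j) (ee i)) p)) ((\<lambda>(i,j). ee j) p)) $ k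
     = (\<Sum>i\<in>UNIV. \<Sum>j\<in>UNIV. R $ i $ j * \<alpha> $ i * (if k = j then 1 else 0))"
    by (simp add: sum_pairs)
  also have "\<dots> = (\<Sum>i\<in>UNIV. R $ i $ k * \<alpha> $ i)"
    by (simp add: if_distrib cong: if_cong)
  also have "\<dots> = sharp R \<alpha> $ k" by (simp add: sharp_def)
  finally show "(\<Sum>p\<in>UNIV. sc (pair \<alpha> ((\<lambda>(i::'n::finite,j). sc (R $ i $ j) (ee i)) p)) ((\<lambda>(i,j). ee j) p)) $ k = sharp R \<alpha> $ k" .
qed



lemma sc_diff[simp]: "sc (c::'a::field) (x - y) = sc c x - sc c y" by (simp add: vec_eq_iff algebra_simps)

lemma lin_commut1: "bilinear_map m \<Longrightarrow> lin (commut m u)"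
  using bil_lin1[of m] bil_lin2[of m] unfolding lin_def commut_def
  by (simp add: lin_add lin_sc)

lemma lin_commut2: "bilinear_map m \<Longrightarrow> lin (\<lambda>v. commut m v w)"
  using bil_lin1[of m] bil_lin2[of m] unfolding lin_def commut_def
  by (simp add: lin_add lin_sc)

lemma rr_formula: assumes bm: "bilinear_map m" and sy: "symm R"
  shows "rr_eval m R \<alpha> \<beta> \<gamma> = - pair \<alpha> (m (sharp R \<beta>) (sharp R \<gamma>)) + pair \<beta> (m (sharp R \<alpha>) (sharp R \<gamma>))
     + pair \<gamma> (commut m (sharp R \<alpha>) (sharp R \<beta>))"
proof -
  let ?a = "\<lambda>(i::'b,j). sc (R $ i $ j) (ee i) :: 'a^'b"
  let ?b = "\<lambda>(i::'b,j). ee j :: 'a^'b"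
  have l1: "\<And>u. lin (m u)" "\<And>w. lin (\<lambda>v. m v w)" using bm bil_lin1 bil_lin2 by auto
  have l2: "\<And>u. lin (commut m u)" "\<And>w. lin (\<lambda>v. commut m v w)" using bm lin_commut1 lin_commut2 by auto
  have t1: "(\<Sum>p\<in>UNIV. \<Sum>q\<in>UNIV. pair \<alpha> (m (?a p) (?a q)) * pair \<beta> (?b p) * pair \<gamma> (?b q))
      = pair \<alpha> (m (sharp R \<beta>) (sharp R \<gamma>))"
  proof -
    have "pair \<alpha> (m (sharp R \<beta>) (sharp R \<gamma>)) = pair \<alpha> (m (\<Sum>p\<in>UNIV. sc (pair \<beta> (?b p)) (?a p)) (\<Sum>q\<in>UNIV. sc (pair \<gamma> (?b q)) (?a q)))"
      by (simp only: sumA[OF sy])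
    also have "\<dots> = (\<Sum>p\<in>UNIV. \<Sum>q\<in>UNIV. pair \<beta> (?b p) * pair \<gamma> (?b q) * pair \<alpha> (m (?a p) (?a q)))"
      by (rule collapse) (use l1 in auto)
    finally show ?thesis by (simp add: mult_ac)
  qed
  have t2: "(\<Sum>p\<in>UNIV. \<Sum>q\<in>UNIV. pair \<alpha> (?a p) * pair \<beta> (m (?b p) (?a q)) * pair \<gamma> (?b q))
      = pair \<beta> (m (sharp R \<alpha>) (sharp R \<gamma>))"
  proof -
    have "pair \<beta> (m (sharp R \<alpha>) (sharp R \<gamma>)) = pair \<beta> (m (\<Sum>p\<in>UNIV. sc (pair \<alpha> (?a p)) (?b p)) (\<Sum>q\<in>UNIV. sc (pair \<gamma> (?b q)) (?a q)))"
      by (simp only: sumA[OF sy] sumB)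
    also have "\<dots> = (\<Sum>p\<in>UNIV. \<Sum>q\<in>UNIV. pair \<alpha> (?a p) * pair \<gamma> (?b q) * pair \<beta> (m (?b p) (?a q)))"
      by (rule collapse) (use l1 in auto)
    finally show ?thesis by (simp add: mult_ac)
  qed
  have t3: "(\<Sum>p\<in>UNIV. \<Sum>q\<in>UNIV. pair \<alpha> (?a p) * pair \<beta> (?a q) * pair \<gamma> (commut m (?b p) (?b q)))
      = pair \<gamma> (commut m (sharp R \<alpha>) (sharp R \<beta>))"
  proof -
    have "pair \<gamma> (commut m (sharp R \<alpha>) (sharp R \<beta>)) = pair \<gamma> (commut m (\<Sum>p\<in>UNIV. sc (pair \<alpha> (?a p)) (?b p)) (\<Sum>q\<in>UNIV. sc (pair \<beta> (?a q)) (?b q)))"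
      by (simp only: sumB)
    also have "\<dots> = (\<Sum>p\<in>UNIV. \<Sum>q\<in>UNIV. pair \<alpha> (?a p) * pair \<beta> (?a q) * pair \<gamma> (commut m (?b p) (?b q)))"
      by (rule collapse) (use l2 in auto)
    finally show ?thesis by (simp add: mult_ac)
  qed
  show ?thesis unfolding rr_eval_def Let_def t1 t2 t3 ..
qed



lemma vec_eq_pair': "(\<And>y. pair y a = pair y b) \<Longrightarrow> a = b"
  using vec_eq_pair pair_comm by metis

definition sdb :: "('a::field ^ 'n::finite \<Rightarrow> 'a ^ 'n \<Rightarrow> 'a ^ 'n) \<Rightarrow> ('a ^ 'n) \<times> ('a ^ 'n) \<Rightarrow> ('a ^ 'n) \<times> ('a ^ 'n) \<Rightarrow> ('a ^ 'n) \<times> ('a ^ 'n)" where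
  "sdb m u v = (commut m (fst u) (fst v), Ldual m (fst u) (snd v) - Ldual m (fst v) (snd u))"

definition phi :: "'a::field ^ 'n::finite ^ 'n \<Rightarrow> ('a ^ 'n) \<times> ('a ^ 'n) \<Rightarrow> ('a ^ 'n) \<times> ('a ^ 'n)" where
  "phi R u = (fst u + sharp R (snd u), snd u)"
definition psi :: "'a::field ^ 'n::finite ^ 'n \<Rightarrow> ('a ^ 'n) \<times> ('a ^ 'n) \<Rightarrow> ('a ^ 'n) \<times> ('a ^ 'n)" where
  "psi R u = (fst u - sharp R (snd u), snd u)"

lemma prod_eqI2: "(\<And>\<delta>. pair \<delta> a = pair \<delta> c) \<Longrightarrow> (\<And>y. pair b y = pair d y) \<Longrightarrow> (a, b) = (c, d)"
  using vec_eq_pair vec_eq_pair' by blast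

lemma prod_eqI3: "(\<And>\<delta>. pair \<delta> (fst u) = pair \<delta> (fst v)) \<Longrightarrow> (\<And>y. pair (snd u) y = pair (snd v) y) \<Longrightarrow> u = v"
  using vec_eq_pair vec_eq_pair' by (metis prod.expand)

lemma padd_simp[simp]: "fst (padd u v) = fst u + fst v" "snd (padd u v) = snd u + snd v"
  by (simp_all add: padd_def)
lemma psc_simp[simp]: "fst (psc c u) = sc c (fst u)" "snd (psc c u) = sc c (snd u)"
  by (simp_all add: psc_def)

lemma Lie_transfer:
  fixes b :: "('a::field^'n) \<times> ('a^'n) \<Rightarrow> ('a^'n) \<times> ('a^'n) \<Rightarrow> ('a^'n) \<times> ('a^'n)"
    and f g :: "('a^'n) \<times> ('a^'n) \<Rightarrow> ('a^'n) \<times> ('a^'n)"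
  assumes L: "is_Lie_bracket b"
    and p1: "\<And>u v. f (padd u v) = padd (f u) (f v)" and p2: "\<And>c u. f (psc c u) = psc c (f u)"
    and q1: "\<And>u v. g (padd u v) = padd (g u) (g v)" and q2: "\<And>c u. g (psc c u) = psc c (g u)"
    and fg: "\<And>u. f (g u) = u"
  shows "is_Lie_bracket (\<lambda>u v. g (b (f u) (f v)))"
proof -
  have g0: "g (0, 0) = (0, 0)"
  proof -
    have "psc 0 (0,0) = ((0,0)::('a^'n)\<times>('a^'n))" by (simp add: psc_def)
    moreover have "psc 0 (g (0,0)) = ((0,0)::('a^'n)\<times>('a^'n))" by (simp add: psc_def)
    ultimately show ?thesis using q2[of 0 "(0,0)"] by metis
  qed
  from L have b1: "\<And>u v w. b (padd u v) w = padd (b u w) (b v w)"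
    and b2: "\<And>c u w. b (psc c u) w = psc c (b u w)"
    and b3: "\<And>u v w. b w (padd u v) = padd (b w u) (b w v)"
    and b4: "\<And>c u w. b w (psc c u) = psc c (b w u)"
    and b5: "\<And>u. b u u = (0, 0)"
    and b6: "\<And>u v w. padd (padd (b u (b v w)) (b v (b w u))) (b w (b u v)) = (0, 0)"
    unfolding is_Lie_bracket_def by blast+
  show ?thesis unfolding is_Lie_bracket_def
    by (simp add: p1 p2 b1 b2 b3 b4 b5 fg g0 flip: q1 q2 add: b6)
qed

lemma pLs: "lin (ast \<alpha>) \<Longrightarrow> pair \<delta> (Lstar ast \<alpha> x) = - pair (ast \<alpha> \<delta>) x"
  using pair_Lstar[of ast \<alpha> \<delta> x] pair_comm by metis

lemma cocycle:
  assumes lm: "\<And>x. lin (m x)" and la: "\<And>\<alpha>. lin (ast \<alpha>)"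
  shows "omega_p (pbr m ast u v) w + omega_p (pbr m ast v w) u + omega_p (pbr m ast w u) v = 0"
proof -
  obtain x \<alpha> y \<beta> z \<gamma> where e: "u = (x, \<alpha>)" "v = (y, \<beta>)" "w = (z, \<gamma>)" by (metis prod.exhaust)
  have om: "\<And>a b. omega_p a b = pair (snd a) (fst b) - pair (snd b) (fst a)"
    unfolding omega_p_def by (simp add: pair_comm)
  show ?thesis unfolding om e pbr_def
    by (simp add: pLs[OF la] pair_Ldual[OF lm] commut_def algebra_simps)
qed

context
  fixes m :: "'a::field ^ 'n::finite \<Rightarrow> 'a ^ 'n \<Rightarrow> 'a ^ 'n" and R :: "'a ^ 'n ^ 'n"
  assumes pl: "is_pre_Lie m" and sy: "symm R" and sm: "s_matrix m R"
begin

lemma bm: "bilinear_map m" using pl is_pre_Lie_def by blast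
lemma l1: "lin (m u)" using bm bil_lin2 by blast
lemma l2: "lin (\<lambda>v. m v w)" using bm bil_lin1 by blast

lemma m_lin[simp]:
  "m (x + y) z = m x z + m y z" "m z (x + y) = m z x + m z y"
  "m (x - y) z = m x z - m y z" "m z (x - y) = m z x - m z y"
  "m (- x) z = - m x z" "m z (- x) = - m z x"
  "m (sc c x) z = sc c (m x z)" "m z (sc c x) = sc c (m z x)"
  "m 0 z = 0" "m z 0 = 0"
  using lin_add[OF l1] lin_add[OF l2] lin_diff[OF l1] lin_diff[OF l2] lin_neg[OF l1] lin_neg[OF l2]
    lin_sc[OF l1] lin_sc[OF l2] lin_0[OF l1] lin_0[OF l2] by auto

lemma T_lin[simp]:
  "sharp R (x + y) = sharp R x + sharp R y" "sharp R (x - y) = sharp R x - sharp R y"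
  "sharp R (- x) = - sharp R x" "sharp R (sc c x) = sc c (sharp R x)" "sharp R 0 = 0"
  using lin_add[OF lin_sharp] lin_diff[OF lin_sharp] lin_neg[OF lin_sharp] lin_sc[OF lin_sharp]
    lin_0[OF lin_sharp] by auto

lemma pL[simp]: "pair (Ldual m x \<alpha>) y = - pair \<alpha> (m x y)" using pair_Ldual[OF l1] .
lemma pR[simp]: "pair (Rdual m x \<alpha>) y = - pair \<alpha> (m y x)" using pair_Rdual[OF l2] .

lemma pD[simp]: "pair (dot_r m R \<alpha> \<beta>) y =
   - pair \<beta> (m (sharp R \<alpha>) y) + pair \<beta> (m y (sharp R \<alpha>)) + pair \<alpha> (m y (sharp R \<beta>))"
  by (simp add: dot_r_def addual_def)

lemma psym: "pair \<beta> (sharp R \<alpha>) = pair \<alpha> (sharp R \<beta>)" using pair_sharp_sym[OF sy] .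

lemma plid: "pair \<delta> (m (m a b) c) = pair \<delta> (m a (m b c)) + pair \<delta> (m (m b a) c) - pair \<delta> (m b (m a c))"
proof -
  have "m (m a b) c - m a (m b c) = m (m b a) c - m b (m a c)"
    using pl unfolding is_pre_Lie_def by blast
  then have "pair \<delta> (m (m a b) c) - pair \<delta> (m a (m b c)) = pair \<delta> (m (m b a) c) - pair \<delta> (m b (m a c))"
    by (metis pair_diff2)
  then show ?thesis by algebra
qed

lemma sfact: "pair \<alpha> (m (sharp R \<beta>) (sharp R \<gamma>)) = pair \<beta> (m (sharp R \<alpha>) (sharp R \<gamma>))
     + pair \<gamma> (m (sharp R \<alpha>) (sharp R \<beta>)) - pair \<gamma> (m (sharp R \<beta>) (sharp R \<alpha>))"
proof -
  have "rr_eval m R \<alpha> \<beta> \<gamma> = 0" using sm unfolding s_matrix_def by blast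
  then show ?thesis unfolding rr_formula[OF bm sy] commut_def pair_diff2 by algebra
qed

lemma Oop[simp]: "sharp R (dot_r m R \<alpha> \<beta>) = m (sharp R \<alpha>) (sharp R \<beta>)"
proof (rule vec_eq_pair')
  fix \<gamma>
  have "pair \<gamma> (sharp R (dot_r m R \<alpha> \<beta>)) = pair (dot_r m R \<alpha> \<beta>) (sharp R \<gamma>)" using psym by simp
  also have "\<dots> = pair \<gamma> (m (sharp R \<alpha>) (sharp R \<beta>))"
    using sfact[of \<alpha> \<gamma> \<beta>] by simp
  finally show "pair \<gamma> (sharp R (dot_r m R \<alpha> \<beta>)) = pair \<gamma> (m (sharp R \<alpha>) (sharp R \<beta>))" .
qed


lemma D_bil: "bilinear_map (dot_r m R)"
  unfolding bilinear_map_def by (intro conjI allI; rule vec_eq_pair; simp add: algebra_simps)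

lemma D_preLie: "is_pre_Lie (dot_r m R)"
  unfolding is_pre_Lie_def
proof (intro conjI allI D_bil)
  fix \<alpha> \<beta> \<gamma>
  let ?D = "dot_r m R"
  show "?D (?D \<alpha> \<beta>) \<gamma> - ?D \<alpha> (?D \<beta> \<gamma>) = ?D (?D \<beta> \<alpha>) \<gamma> - ?D \<beta> (?D \<alpha> \<gamma>)"
  proof (rule vec_eq_pair)
    fix w
    let ?x = "sharp R \<alpha>" and ?y = "sharp R \<beta>" and ?z = "sharp R \<gamma>"
    show "pair (?D (?D \<alpha> \<beta>) \<gamma> - ?D \<alpha> (?D \<beta> \<gamma>)) w = pair (?D (?D \<beta> \<alpha>) \<gamma> - ?D \<beta> (?D \<alpha> \<gamma>)) w"
      using plid[of \<gamma> ?x ?y w] plid[of \<gamma> ?x w ?y] plid[of \<gamma> ?y w ?x] plid[of \<alpha> w ?y ?z] plid[of \<beta> ?x w ?z]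
      by simp
  qed
qed


lemma sdb_Lie: "is_Lie_bracket (sdb m)"
  unfolding is_Lie_bracket_def
proof (intro conjI allI)
  fix u v w :: "('a^'n) \<times> ('a^'n)" and c :: 'a
  show "sdb m (padd u v) w = padd (sdb m u w) (sdb m v w)"
    by (rule prod_eqI3) (simp_all add: sdb_def commut_def algebra_simps)
  show "sdb m (psc c u) w = psc c (sdb m u w)"
    by (rule prod_eqI3) (simp_all add: sdb_def commut_def algebra_simps)
  show "sdb m w (padd u v) = padd (sdb m w u) (sdb m w v)"
    by (rule prod_eqI3) (simp_all add: sdb_def commut_def algebra_simps)
  show "sdb m w (psc c u) = psc c (sdb m w u)"
    by (rule prod_eqI3) (simp_all add: sdb_def commut_def algebra_simps)
  show "sdb m u u = (0, 0)"
    by (rule prod_eqI3) (simp_all add: sdb_def commut_def algebra_simps)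
  show "padd (padd (sdb m u (sdb m v w)) (sdb m v (sdb m w u))) (sdb m w (sdb m u v)) = (0, 0)"
  proof (rule prod_eqI3)
    fix \<delta>
    let ?x = "fst u" and ?y = "fst v" and ?z = "fst w"
    show "pair \<delta> (fst (padd (padd (sdb m u (sdb m v w)) (sdb m v (sdb m w u))) (sdb m w (sdb m u v)))) = pair \<delta> (fst ((0, 0)::('a^'n) \<times> ('a^'n)))"
      using plid[of \<delta> ?y ?x ?z] plid[of \<delta> ?z ?y ?x] plid[of \<delta> ?x ?z ?y]
      apply (simp add: sdb_def commut_def algebra_simps)
      by algebra
  next
    fix y
    let ?x = "fst u" and ?y = "fst v" and ?z = "fst w"
    show "pair (snd (padd (padd (sdb m u (sdb m v w)) (sdb m v (sdb m w u))) (sdb m w (sdb m u v)))) y = pair (snd ((0, 0)::('a^'n) \<times> ('a^'n))) y"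
      using plid[of "snd u" ?y ?z y] plid[of "snd v" ?z ?x y] plid[of "snd w" ?x ?y y]
      by (simp add: sdb_def commut_def algebra_simps)
  qed
qed

lemma pTL[simp]: "pair \<delta> (sharp R (Ldual m x \<beta>)) = - pair \<beta> (m x (sharp R \<delta>))"
  using psym[of \<delta> "Ldual m x \<beta>"] by simp

lemma pDl: "lin (dot_r m R \<alpha>)" using D_bil bil_lin2 by blast

lemma pbr_eq: "pbr m (dot_r m R) u v = psi R (sdb m (phi R u) (phi R v))"
proof -
  obtain x \<alpha> y \<beta> where e: "u = (x, \<alpha>)" "v = (y, \<beta>)" by (metis prod.exhaust)
  show ?thesis unfolding e
  proof (rule prod_eqI3)
    fix \<delta>
    show "pair \<delta> (fst (pbr m (dot_r m R) (x, \<alpha>) (y, \<beta>))) = pair \<delta> (fst (psi R (sdb m (phi R (x, \<alpha>)) (phi R (y, \<beta>)))))"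
      using sfact[of \<alpha> \<beta> \<delta>]
      by (simp add: pbr_def psi_def sdb_def phi_def pLs[OF pDl] commut_def algebra_simps)
  next
    fix w
    show "pair (snd (pbr m (dot_r m R) (x, \<alpha>) (y, \<beta>))) w = pair (snd (psi R (sdb m (phi R (x, \<alpha>)) (phi R (y, \<beta>))))) w"
      by (simp add: pbr_def psi_def sdb_def phi_def commut_def algebra_simps)
  qed
qed


lemma phase: "phase_space m (dot_r m R)"
  unfolding phase_space_def
proof
  have "pbr m (dot_r m R) = (\<lambda>u v. psi R (sdb m (phi R u) (phi R v)))"
    using pbr_eq by (intro ext) simp
  moreover have "is_Lie_bracket (\<lambda>u v. psi R (sdb m (phi R u) (phi R v)))"
    by (rule Lie_transfer[OF sdb_Lie]) (simp_all add: phi_def psi_def padd_def psc_def)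
  ultimately show "is_Lie_bracket (pbr m (dot_r m R))" by simp
  show "\<forall>u v w. omega_p (pbr m (dot_r m R) u v) w + omega_p (pbr m (dot_r m R) v w) u + omega_p (pbr m (dot_r m R) w u) v = 0"
    using cocycle[of m "dot_r m R", OF l1 pDl] by blast
qed

end

lemma sharp_sum: "sharp (r + smat t k) \<alpha> = sharp r \<alpha> + sc t (sharp k \<alpha>)"
  by (simp add: vec_eq_iff sharp_def smat_def sum.distrib sum_distrib_left algebra_simps)

lemma dot_sum: assumes "bilinear_map m"
  shows "dot_r m r \<alpha> \<beta> + sc t (dot_r m k \<alpha> \<beta>) = dot_r m (r + smat t k) \<alpha> \<beta>"
proof (rule vec_eq_pair)
  fix y
  have a: "\<And>x. lin (m x)" and b: "\<And>x. lin (\<lambda>v. m v x)" using assms bil_lin1 bil_lin2 by blast+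
  show "pair (dot_r m r \<alpha> \<beta> + sc t (dot_r m k \<alpha> \<beta>)) y = pair (dot_r m (r + smat t k) \<alpha> \<beta>) y"
    by (simp add: dot_r_def addual_def sharp_sum pair_Ldual[OF a] pair_Rdual[OF b]
        lin_add[OF a] lin_add[OF b] lin_sc[OF a] lin_sc[OF b] algebra_simps)
qed

theorem proposition5p8:
  fixes m :: "'a::field_char_0 ^ 'n::finite \<Rightarrow> 'a ^ 'n \<Rightarrow> 'a ^ 'n"
    and r \<kappa> :: "'a ^ 'n ^ 'n"
  assumes "is_pre_Lie m"
    and "symm r" and "s_matrix m r"
    and "symm \<kappa>" and "\<forall>t. s_matrix m (r + smat t \<kappa>)"
  shows "\<forall>t::'a.
     is_pre_Lie (\<lambda>\<alpha> \<beta>. dot_r m r \<alpha> \<beta> + sc t (dot_r m \<kappa> \<alpha> \<beta>)) \<and>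
     phase_space m (\<lambda>\<alpha> \<beta>. dot_r m r \<alpha> \<beta> + sc t (dot_r m \<kappa> \<alpha> \<beta>))"
proof
  fix t :: 'a
  have bm: "bilinear_map m" using assms(1) is_pre_Lie_def by blast
  have e: "(\<lambda>\<alpha> \<beta>. dot_r m r \<alpha> \<beta> + sc t (dot_r m \<kappa> \<alpha> \<beta>)) = dot_r m (r + smat t \<kappa>)"
    using dot_sum[OF bm] by (intro ext) simp
  have sy: "symm (r + smat t \<kappa>)" using assms(2,4) by (simp add: symm_def smat_def)
  have sm: "s_matrix m (r + smat t \<kappa>)" using assms(5) by blast
  show "is_pre_Lie (\<lambda>\<alpha> \<beta>. dot_r m r \<alpha> \<beta> + sc t (dot_r m \<kappa> \<alpha> \<beta>)) \<and>
     phase_space m (\<lambda>\<alpha> \<beta>. dot_r m r \<alpha> \<beta> + sc t (dot_r m \<kappa> \<alpha> \<beta>))"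
    unfolding e using D_preLie[OF assms(1) sy sm] phase[OF assms(1) sy sm] by blast
qed

end
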